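(* Let $m\in\mathbb{N}$. If $S\subseteq\mathbb{N}^{\mathbb{N}}$ is $m$th-order guessable, then $S$ is in $\mathbf{\Delta}'_{m+2}$. More precisely, $S$ is a countable union of countable intersections, and also a countable intersection of countable unions, of sets that are $\mathbf{\Delta}^0_m$ if $m>0$ and clopen if $m=0$.
   Context: Baire space $\mathbb{N}^{\mathbb{N}}$ carries the product of discrete topologies; $\mathbf{\Sigma}^0_n,\mathbf{\Pi}^0_n,\mathbf{\Delta}^0_n$ are the boldface Borel pointclasses. Definition: $\mathbf{\Delta}'_2=\mathbf{\Delta}^0_2$; for $k>2$, $S\in\mathbf{\Delta}'_k$ iff $S$ is a countable union of countable intersections of $\mathbf{\Delta}^0_{k-2}$ sets and also a countable intersection of countable unions of $\mathbf{\Delta}^0_{k-2}$ sets. The language $\mathscr{L}_{\max}$ is the first-order language (with equality) having: a constant symbol $\overline{n}$ for each $n\in\mathbb{N}$; an $n$-ary function symbol $\tilde w$ for each $w:\mathbb{N}^n\to\mathbb{N}$; an $n$-ary predicate symbol $\tilde p$ for each $p\subseteq\mathbb{N}^n$; a special unary function symbol $\mathbf{f}$; and, for every $n$ and every $G:\mathbb{N}^n\times\mathbb{N}^{<\mathbb{N}}\to\mathbb{N}$, an $(n+1)$-ary function symbol $G\circ\mathbf{f}$. For $f\in\mathbb{N}^{\mathbb{N}}$, $\mathscr{M}_f$ is the structure with universe $\mathbb{N}$ interpreting $\overline n$ as $n$, $\tilde w$ as $w$, $\tilde p$ as $p$, $\mathbf f$ as $f$, and $G\circ\mathbf f$ as $(m_1,\dots,m_n,m)\mapsto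 G(m_1,\dots,m_n,f(0),\dots,f(m))$. For a sentence $\phi$, $f(\phi)=1$ if $\mathscr{M}_f\models\phi$ and $f(\phi)=0$ otherwise. Formula classes: "quantifier-free" means containing no quantifiers at all (not even bounded ones). $\Sigma_0=\Pi_0=\Delta_0$ is the set of quantifier-free formulas; $\Sigma_{n+1}=\{\exists x\,\phi:\phi\in\Pi_n\}$ and $\Pi_{n+1}=\{\forall x\,\phi:\phi\in\Sigma_n\}$; a formula is $\Delta_{n+1}$ if it is equivalent, in every structure $\mathscr{M}_f$ ($f\in\mathbb{N}^{\mathbb{N}}$), to some $\Sigma_{n+1}$ formula of $\mathscr{L}_{\max}$ and also to some $\Pi_{n+1}$ formula of $\mathscr{L}_{\max}$. For a set $\Sigma$ of symbols of $\mathscr{L}_{\max}$, a sentence "of $\mathscr{L}_{\max}\cap\Sigma$" is an $\mathscr{L}_{\max}$-sentence all of whose non-logical symbols lie in $\Sigma$. Definition ($m$th-order guessable): $S\subseteq\mathbb{N}^{\mathbb{N}}$ is $m$th-order guessable if there exist a countable set $\Sigma$ of $\mathscr{L}_{\max}$-symbols, a listing $\phi_0,\phi_1,\dots$ of all $\Delta_m$ sentences of $\mathscr{L}_{\max}\cap\Sigma$, and a function $G:\{0,1\}^{<\mathbb{N}}\to\mathbb{N}$ such that for every $f:\mathbb{N}\to\mathbb{N}$, $\lim_{n\to\infty}G(f(\phi_0),\dots,f(\phi_n))$ equals $1$ if $f\in S$ and $0$ if $f\notin S$. *)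

theory Defs
  imports "HOL-Analysis.Analysis"
begin

section \<open>Boldface Borel pointclasses on Baire space\<close>

text \<open>Baire space: nat \<Rightarrow> nat with the library's product topology (nat carries the discrete topology).\<close>

type_synonym baire = "nat \<Rightarrow> nat"

text \<open>Index n \<ge> 1: sigma0 1 = open sets, pi0 n = complements of sigma0 n,
  sigma0 (n+1) = countable unions of pi0 n sets (i.e. of sets whose complement is in sigma0 n). The value at index 0 is never used.\<close>

primrec sigma0 :: "nat \<Rightarrow> baire set set" where
  "sigma0 0 = {}"
| "sigma0 (Suc n) = (if n = 0 then {A. open A}
                     else {(\<Union>i::nat. A i) | A. \<forall>i::nat. - A i \<in> sigma0 n})"

definition pi0 :: "nat \<Rightarrow> baire set set" where
  "pi0 n = {- A | A. A \<in> sigma0 n}"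

definition delta0 :: "nat \<Rightarrow> baire set set" where
  "delta0 n = sigma0 n \<inter> pi0 n"

definition union_of_inters :: "'a set set \<Rightarrow> 'a set set" where
  "union_of_inters C = {(\<Union>i::nat. \<Inter>j::nat. A i j) | A. \<forall>i j. A i j \<in> C}"

definition inter_of_unions :: "'a set set \<Rightarrow> 'a set set" where
  "inter_of_unions C = {(\<Inter>i::nat. \<Union>j::nat. A i j) | A. \<forall>i j. A i j \<in> C}"

text \<open>The class Delta'_k (only meaningful for k \<ge> 2).\<close>

definition delta' :: "nat \<Rightarrow> baire set set" where
  "delta' k = (if k = 2 then delta0 2
               else if k > 2 then union_of_inters (delta0 (k - 2)) \<inter> inter_of_unions (delta0 (k - 2))
               else {})"

section \<open>The language L_max\<close>

text \<open>Function symbols: the constant n-bar, the n-ary symbol w-tilde for w : N^n \<rightarrow> N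
  (w is given as a function on lists; only its values on lists of length n matter),
  the special unary symbol f, and the (n+1)-ary symbol G o f for
  G : N^n \<times> N^{<N} \<rightarrow> N (given as a function of a list of length n and a finite sequence).\<close>

datatype fsym =
    CNum nat
  | WFun nat "nat list \<Rightarrow> nat"
  | FSpecial
  | GFun nat "nat list \<Rightarrow> nat list \<Rightarrow> nat"

fun farity :: "fsym \<Rightarrow> nat" where
  "farity (CNum k) = 0"
| "farity (WFun n w) = n"
| "farity FSpecial = 1"
| "farity (GFun n G) = Suc n"

text \<open>Predicate symbols p-tilde for p \<subseteq> N^n (p given as a set of lists).\<close>

datatype psym = PSym nat "nat list set"

fun parity :: "psym \<Rightarrow> nat" where
  "parity (PSym n p) = n"

datatype sym = FS fsym | PS psym

datatype trm = Var nat | App fsym "trm list"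

datatype fm =
    Eq trm trm
  | Rel psym "trm list"
  | Neg fm
  | Conj fm fm
  | Disj fm fm
  | Imp fm fm
  | Ex nat fm
  | All nat fm

fun fsym_interp :: "(nat \<Rightarrow> nat) \<Rightarrow> fsym \<Rightarrow> nat list \<Rightarrow> nat" where
  "fsym_interp f (CNum k) xs = k"
| "fsym_interp f (WFun n w) xs = w xs"
| "fsym_interp f FSpecial xs = f (hd xs)"
| "fsym_interp f (GFun n G) xs = G (take n xs) (map f [0..<Suc (xs ! n)])"

fun psym_interp :: "psym \<Rightarrow> nat list \<Rightarrow> bool" where
  "psym_interp (PSym n p) xs = (xs \<in> p)"

fun evalt :: "(nat \<Rightarrow> nat) \<Rightarrow> (nat \<Rightarrow> nat) \<Rightarrow> trm \<Rightarrow> nat" where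
  "evalt f e (Var x) = e x"
| "evalt f e (App s ts) = fsym_interp f s (map (evalt f e) ts)"

fun sat :: "(nat \<Rightarrow> nat) \<Rightarrow> (nat \<Rightarrow> nat) \<Rightarrow> fm \<Rightarrow> bool" where
  "sat f e (Eq t u) = (evalt f e t = evalt f e u)"
| "sat f e (Rel p ts) = psym_interp p (map (evalt f e) ts)"
| "sat f e (Neg \<phi>) = (\<not> sat f e \<phi>)"
| "sat f e (Conj \<phi> \<psi>) = (sat f e \<phi> \<and> sat f e \<psi>)"
| "sat f e (Disj \<phi> \<psi>) = (sat f e \<phi> \<or> sat f e \<psi>)"
| "sat f e (Imp \<phi> \<psi>) = (sat f e \<phi> \<longrightarrow> sat f e \<psi>)"
| "sat f e (Ex x \<phi>) = (\<exists>a. sat f (e(x := a)) \<phi>)"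
| "sat f e (All x \<phi>) = (\<forall>a. sat f (e(x := a)) \<phi>)"

fun wf_trm :: "trm \<Rightarrow> bool" where
  "wf_trm (Var x) = True"
| "wf_trm (App s ts) = (length ts = farity s \<and> (\<forall>t\<in>set ts. wf_trm t))"

fun wf_fm :: "fm \<Rightarrow> bool" where
  "wf_fm (Eq t u) = (wf_trm t \<and> wf_trm u)"
| "wf_fm (Rel p ts) = (length ts = parity p \<and> (\<forall>t\<in>set ts. wf_trm t))"
| "wf_fm (Neg \<phi>) = wf_fm \<phi>"
| "wf_fm (Conj \<phi> \<psi>) = (wf_fm \<phi> \<and> wf_fm \<psi>)"
| "wf_fm (Disj \<phi> \<psi>) = (wf_fm \<phi> \<and> wf_fm \<psi>)"
| "wf_fm (Imp \<phi> \<psi>) = (wf_fm \<phi> \<and> wf_fm \<psi>)"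
| "wf_fm (Ex x \<phi>) = wf_fm \<phi>"
| "wf_fm (All x \<phi>) = wf_fm \<phi>"

fun fv_trm :: "trm \<Rightarrow> nat set" where
  "fv_trm (Var x) = {x}"
| "fv_trm (App s ts) = (\<Union>t\<in>set ts. fv_trm t)"

fun fv :: "fm \<Rightarrow> nat set" where
  "fv (Eq t u) = fv_trm t \<union> fv_trm u"
| "fv (Rel p ts) = (\<Union>t\<in>set ts. fv_trm t)"
| "fv (Neg \<phi>) = fv \<phi>"
| "fv (Conj \<phi> \<psi>) = fv \<phi> \<union> fv \<psi>"
| "fv (Disj \<phi> \<psi>) = fv \<phi> \<union> fv \<psi>"
| "fv (Imp \<phi> \<psi>) = fv \<phi> \<union> fv \<psi>"
| "fv (Ex x \<phi>) = fv \<phi> - {x}"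
| "fv (All x \<phi>) = fv \<phi> - {x}"

fun syms_trm :: "trm \<Rightarrow> sym set" where
  "syms_trm (Var x) = {}"
| "syms_trm (App s ts) = insert (FS s) (\<Union>t\<in>set ts. syms_trm t)"

fun syms :: "fm \<Rightarrow> sym set" where
  "syms (Eq t u) = syms_trm t \<union> syms_trm u"
| "syms (Rel p ts) = insert (PS p) (\<Union>t\<in>set ts. syms_trm t)"
| "syms (Neg \<phi>) = syms \<phi>"
| "syms (Conj \<phi> \<psi>) = syms \<phi> \<union> syms \<psi>"
| "syms (Disj \<phi> \<psi>) = syms \<phi> \<union> syms \<psi>"
| "syms (Imp \<phi> \<psi>) = syms \<phi> \<union> syms \<psi>"
| "syms (Ex x \<phi>) = syms \<phi>"
| "syms (All x \<phi>) = syms \<phi>"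

definition sentence :: "fm \<Rightarrow> bool" where
  "sentence \<phi> \<longleftrightarrow> wf_fm \<phi> \<and> fv \<phi> = {}"

fun qfree :: "fm \<Rightarrow> bool" where
  "qfree (Eq t u) = True"
| "qfree (Rel p ts) = True"
| "qfree (Neg \<phi>) = qfree \<phi>"
| "qfree (Conj \<phi> \<psi>) = (qfree \<phi> \<and> qfree \<psi>)"
| "qfree (Disj \<phi> \<psi>) = (qfree \<phi> \<and> qfree \<psi>)"
| "qfree (Imp \<phi> \<psi>) = (qfree \<phi> \<and> qfree \<psi>)"
| "qfree (Ex x \<phi>) = False"
| "qfree (All x \<phi>) = False"

fun is_Sigma :: "nat \<Rightarrow> fm \<Rightarrow> bool"
and is_Pi :: "nat \<Rightarrow> fm \<Rightarrow> bool" where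
  "is_Sigma 0 \<phi> = qfree \<phi>"
| "is_Sigma (Suc n) \<phi> = (\<exists>x \<psi>. \<phi> = Ex x \<psi> \<and> is_Pi n \<psi>)"
| "is_Pi 0 \<phi> = qfree \<phi>"
| "is_Pi (Suc n) \<phi> = (\<exists>x \<psi>. \<phi> = All x \<psi> \<and> is_Sigma n \<psi>)"

definition equiv_fm :: "fm \<Rightarrow> fm \<Rightarrow> bool" where
  "equiv_fm \<phi> \<psi> \<longleftrightarrow> (\<forall>f e. sat f e \<phi> = sat f e \<psi>)"

fun is_Delta :: "nat \<Rightarrow> fm \<Rightarrow> bool" where
  "is_Delta 0 \<phi> = qfree \<phi>"
| "is_Delta (Suc n) \<phi> =
     ((\<exists>\<psi>. wf_fm \<psi> \<and> is_Sigma (Suc n) \<psi> \<and> equiv_fm \<phi> \<psi>) \<and>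
      (\<exists>\<theta>. wf_fm \<theta> \<and> is_Pi (Suc n) \<theta> \<and> equiv_fm \<phi> \<theta>))"

text \<open>f(phi) for a sentence phi (the assignment is irrelevant for sentences).\<close>

definition truth :: "(nat \<Rightarrow> nat) \<Rightarrow> fm \<Rightarrow> nat" where
  "truth f \<phi> = (if sat f (\<lambda>_. 0) \<phi> then 1 else 0)"

definition guessable :: "nat \<Rightarrow> (nat \<Rightarrow> nat) set \<Rightarrow> bool" where
  "guessable m S \<longleftrightarrow>
     (\<exists>(Sg::sym set) (phi::nat \<Rightarrow> fm) (G::nat list \<Rightarrow> nat).
        countable Sg \<and>
        range phi = {\<phi>. sentence \<phi> \<and> syms \<phi> \<subseteq> Sg \<and> is_Delta m \<phi>} \<and>
        (\<forall>f::nat \<Rightarrow> nat.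
           (\<lambda>n. G (map (\<lambda>i. truth f (phi i)) [0..<Suc n]))
             \<longlonglongrightarrow> (if f \<in> S then 1 else 0)))"

end

theory Submission imports Defs begin

definition cyl :: "nat \<Rightarrow> (nat \<Rightarrow> nat) \<Rightarrow> (nat \<Rightarrow> nat) set" where
  "cyl N f = {g. \<forall>i<N. g i = f i}"

lemma open_cyl: "open (cyl N f)"
proof (induction N)
  case 0 then show ?case by (simp add: cyl_def)
next
  case (Suc N)
  have e: "cyl (Suc N) f = cyl N f \<inter> (\<lambda>g. g N) -` {f N}"
    by (auto simp: cyl_def less_Suc_eq)
  have "open ((\<lambda>g. g N) -` {f N})"
    by (rule open_vimage[OF open_discrete continuous_on_product_coordinates])
  then show ?case using Suc e by (simp add: open_Int)
qed

definition locconst :: "((nat \<Rightarrow> nat) \<Rightarrow> 'a) \<Rightarrow> bool" where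
  "locconst P \<longleftrightarrow> (\<forall>f. \<exists>N. \<forall>g. (\<forall>i<N. g i = f i) \<longrightarrow> P g = P f)"

lemma locconstD: "locconst P \<Longrightarrow> \<exists>N. \<forall>g. (\<forall>i<N. g i = f i) \<longrightarrow> P g = P f"
  unfolding locconst_def by (erule_tac x=f in allE)

lemma locconst_open: assumes "locconst P" shows "open {f. P f = c}"
proof (rule topological_space_class.openI)
  fix f assume f: "f \<in> {f. P f = c}"
  obtain N where N: "\<forall>g. (\<forall>i<N. g i = f i) \<longrightarrow> P g = P f" using locconstD[OF assms, of f] by (elim exE)
  have "cyl N f \<subseteq> {f. P f = c}"
  proof
    fix g assume "g \<in> cyl N f"
    then have a: "\<forall>i<N. g i = f i" unfolding cyl_def by (rule CollectD)
    have "P g = P f" using mp[OF spec[OF N, of g] a] .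
    moreover have "P f = c" using f by (rule CollectD)
    ultimately have "P g = c" by (rule trans)
    then show "g \<in> {f. P f = c}" by (simp only: mem_Collect_eq)
  qed
  moreover have "f \<in> cyl N f" unfolding cyl_def by simp
  ultimately show "\<exists>T. open T \<and> f \<in> T \<and> T \<subseteq> {f. P f = c}"
    using open_cyl[of N f] by (intro exI[of _ "cyl N f"] conjI)
qed

lemma locconst_clopen: assumes "locconst (P :: _ \<Rightarrow> bool)" shows "open {f. P f} \<and> closed {f. P f}"
proof -
  have o1: "open {f. P f = True}" by (rule locconst_open[OF assms])
  have o2: "open {f. P f = False}" by (rule locconst_open[OF assms])
  have e1: "{f. P f = True} = {f. P f}" by simp
  have e2: "{f. P f = False} = - {f. P f}" by auto
  show ?thesis unfolding closed_def using o1 o2 unfolding e1 e2 by (rule conjI)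
qed

lemma locconst2:
  assumes P: "locconst P" and Q: "locconst Q"
  shows "locconst (\<lambda>g. F (P g) (Q g))"
  unfolding locconst_def
proof
  fix f
  obtain N1 where 1: "\<forall>g. (\<forall>i<N1. g i = f i) \<longrightarrow> P g = P f" using locconstD[OF P, of f] by (elim exE)
  obtain N2 where 2: "\<forall>g. (\<forall>i<N2. g i = f i) \<longrightarrow> Q g = Q f" using locconstD[OF Q, of f] by (elim exE)
  show "\<exists>N. \<forall>g. (\<forall>i<N. g i = f i) \<longrightarrow> F (P g) (Q g) = F (P f) (Q f)"
  proof (intro exI[of _ "N1+N2"] allI impI)
    fix g assume a: "\<forall>i<N1+N2. g i = f i"
    have a1: "\<forall>i<N1. g i = f i" using a by simp
    have a2: "\<forall>i<N2. g i = f i" using a by simp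
    have p: "P g = P f" by (rule mp[OF spec[OF 1] a1])
    have q: "Q g = Q f" by (rule mp[OF spec[OF 2] a2])
    show "F (P g) (Q g) = F (P f) (Q f)" by (simp only: p q)
  qed
qed

lemma locconst1:
  assumes P: "locconst P"
  shows "locconst (\<lambda>g. F (P g))"
  using locconst2[OF P P, of "\<lambda>x y. F x"] by simp

lemma locconst_const: "locconst (\<lambda>g. c)"
  unfolding locconst_def by simp

lemma list_loc:
  "(\<And>t. t\<in>set ts \<Longrightarrow> locconst (\<lambda>g. h g t)) \<Longrightarrow> locconst (\<lambda>g. map (h g) ts)"
proof (induction ts)
  case Nil then show ?case by (simp add: locconst_const)
next
  case (Cons t ts)
  have "locconst (\<lambda>g. h g t # map (h g) ts)"
    by (rule locconst2[where F="(#)"]) (use Cons in auto)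
  then show ?case by simp
qed

lemma evalt_loc: "locconst (\<lambda>g. evalt g e t)"
proof (induction t)
  case (Var x) then show ?case by (simp add: locconst_const)
next
  case (App s ts)
  have L: "locconst (\<lambda>g. map (evalt g e) ts)" by (rule list_loc) (rule App.IH)
  show ?case unfolding locconst_def
  proof
    fix f
    obtain N1 where 1: "\<forall>g. (\<forall>i<N1. g i = f i) \<longrightarrow> map (evalt g e) ts = map (evalt f e) ts"
      using locconstD[OF L, of f] by (elim exE)
    define xs where "xs = map (evalt f e) ts"
    define K where "K = (case s of FSpecial \<Rightarrow> Suc (hd xs) | GFun n G \<Rightarrow> Suc (xs ! n) | _ \<Rightarrow> 0)"
    show "\<exists>N. \<forall>g. (\<forall>i<N. g i = f i) \<longrightarrow> evalt g e (App s ts) = evalt f e (App s ts)"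
    proof (intro exI[of _ "N1 + K"] allI impI)
      fix g assume a: "\<forall>i<N1 + K. g i = f i"
      have a1: "\<forall>i<N1. g i = f i" using a by simp
      have m: "map (evalt g e) ts = xs" unfolding xs_def by (rule mp[OF spec[OF 1] a1])
      have a2: "\<forall>i<K. g i = f i" using a by simp
      have "fsym_interp g s xs = fsym_interp f s xs"
      proof (cases s)
        case FSpecial
        then have "hd xs < K" by (simp add: K_def)
        then show ?thesis using a2 FSpecial by simp
      next
        case (GFun n G)
        then have "xs ! n < K" by (simp add: K_def)
        then have mm: "map g [0..<Suc (xs ! n)] = map f [0..<Suc (xs ! n)]" using a2 by simp
        show ?thesis unfolding GFun fsym_interp.simps mm ..
      qed auto
      then show "evalt g e (App s ts) = evalt f e (App s ts)" by (simp add: m xs_def)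
    qed
  qed
qed

lemma sat_loc: "qfree \<phi> \<Longrightarrow> locconst (\<lambda>g. sat g e \<phi>)"
proof (induction \<phi> arbitrary: e)
  case (Eq t u)
  then show ?case using locconst2[OF evalt_loc[of e t] evalt_loc[of e u], of "(=)"] by simp
next
  case (Rel p ts)
  have L: "locconst (\<lambda>g. map (evalt g e) ts)" by (rule list_loc) (rule evalt_loc)
  show ?case using locconst1[OF L, of "psym_interp p"] by simp
next
  case (Neg \<phi>) then show ?case using locconst1[of "\<lambda>g. sat g e \<phi>" Not] by simp
next
  case (Conj \<phi> \<psi>) then show ?case using locconst2[of "\<lambda>g. sat g e \<phi>" "\<lambda>g. sat g e \<psi>" "(\<and>)"] by simp
next
  case (Disj \<phi> \<psi>) then show ?case using locconst2[of "\<lambda>g. sat g e \<phi>" "\<lambda>g. sat g e \<psi>" "(\<or>)"] by simp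
next
  case (Imp \<phi> \<psi>) then show ?case using locconst2[of "\<lambda>g. sat g e \<phi>" "\<lambda>g. sat g e \<psi>" "(\<longrightarrow>)"] by simp
qed auto

lemma pi0_iff: "A \<in> pi0 n \<longleftrightarrow> - A \<in> sigma0 n"
  unfolding pi0_def by (auto intro: exI[of _ "- A"])

lemma sigma0_1: "sigma0 (Suc 0) = {A. open A}" by simp

lemma sigma0_SS: "A \<in> sigma0 (Suc (Suc k)) \<longleftrightarrow> (\<exists>B. A = (\<Union>i::nat. B i) \<and> (\<forall>i. B i \<in> pi0 (Suc k)))"
  by (simp add: pi0_iff)

lemma sat_sigma_pi:
  "(is_Sigma (Suc k) \<psi> \<longrightarrow> (\<forall>e. {f. sat f e \<psi>} \<in> sigma0 (Suc k))) \<and>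
   (is_Pi (Suc k) \<psi> \<longrightarrow> (\<forall>e. {f. sat f e \<psi>} \<in> pi0 (Suc k)))"
proof (induction k arbitrary: \<psi>)
  case 0
  show ?case
  proof (intro conjI impI allI)
    fix e assume "is_Sigma (Suc 0) \<psi>"
    then obtain x ch where p: "\<psi> = Ex x ch" "qfree ch" by auto
    have "\<And>a. open {f. sat f (e(x:=a)) ch}" using locconst_clopen[OF sat_loc[OF p(2)]] by blast
    then have "open {f. \<exists>a. sat f (e(x:=a)) ch}" by (rule open_Collect_ex)
    then show "{f. sat f e \<psi>} \<in> sigma0 (Suc 0)" using p by simp
  next
    fix e assume "is_Pi (Suc 0) \<psi>"
    then obtain x ch where p: "\<psi> = All x ch" "qfree ch" by auto
    have "\<And>a. closed {f. sat f (e(x:=a)) ch}" using locconst_clopen[OF sat_loc[OF p(2)]] by blast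
    then have "closed {f. \<forall>a. sat f (e(x:=a)) ch}" by (rule closed_Collect_all)
    then show "{f. sat f e \<psi>} \<in> pi0 (Suc 0)" using p by (simp add: pi0_iff closed_def)
  qed
next
  case (Suc k)
  show ?case
  proof (intro conjI impI allI)
    fix e assume "is_Sigma (Suc (Suc k)) \<psi>"
    then obtain x ch where p: "\<psi> = Ex x ch" "is_Pi (Suc k) ch" by auto
    have "\<forall>a. {f. sat f (e(x:=a)) ch} \<in> pi0 (Suc k)" using Suc.IH p(2) by blast
    moreover have "{f. sat f e \<psi>} = (\<Union>a. {f. sat f (e(x:=a)) ch})" using p by auto
    ultimately show "{f. sat f e \<psi>} \<in> sigma0 (Suc (Suc k))" unfolding sigma0_SS by iprover
  next
    fix e assume "is_Pi (Suc (Suc k)) \<psi>"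
    then obtain x ch where p: "\<psi> = All x ch" "is_Sigma (Suc k) ch" by auto
    have "\<forall>a. - {f. sat f (e(x:=a)) ch} \<in> pi0 (Suc k)" using Suc.IH p(2) by (simp add: pi0_iff)
    moreover have "- {f. sat f e \<psi>} = (\<Union>a. - {f. sat f (e(x:=a)) ch})" using p by auto
    ultimately show "{f. sat f e \<psi>} \<in> pi0 (Suc (Suc k))" unfolding pi0_iff sigma0_SS by blast
  qed
qed

lemma sigma0_closed:
  "{} \<in> sigma0 (Suc k) \<and> UNIV \<in> sigma0 (Suc k) \<and>
   (\<forall>A B. A \<in> sigma0 (Suc k) \<longrightarrow> B \<in> sigma0 (Suc k) \<longrightarrow> A \<union> B \<in> sigma0 (Suc k) \<and> A \<inter> B \<in> sigma0 (Suc k))"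
proof (induction k)
  case 0 then show ?case by auto
next
  case (Suc k)
  have e: "{} \<in> pi0 (Suc k)" "UNIV \<in> pi0 (Suc k)" using Suc by (simp_all add: pi0_iff)
  have pu: "A \<union> B \<in> pi0 (Suc k)" if "A \<in> pi0 (Suc k)" "B \<in> pi0 (Suc k)" for A B
  proof -
    have "- A \<inter> - B \<in> sigma0 (Suc k)" using Suc that by (simp add: pi0_iff)
    then show ?thesis by (simp add: pi0_iff)
  qed
  have pi: "A \<inter> B \<in> pi0 (Suc k)" if "A \<in> pi0 (Suc k)" "B \<in> pi0 (Suc k)" for A B
  proof -
    have "- A \<union> - B \<in> sigma0 (Suc k)" using Suc that by (simp add: pi0_iff)
    then show ?thesis by (simp add: pi0_iff)
  qed
  have 1: "{} \<in> sigma0 (Suc (Suc k))" unfolding sigma0_SS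
    by (rule exI[of _ "\<lambda>_. {}"]) (simp add: e)
  have 2: "UNIV \<in> sigma0 (Suc (Suc k))" unfolding sigma0_SS
    by (rule exI[of _ "\<lambda>_. UNIV"]) (simp add: e)
  have 3: "A \<union> B \<in> sigma0 (Suc (Suc k)) \<and> A \<inter> B \<in> sigma0 (Suc (Suc k))"
    if aA: "A \<in> sigma0 (Suc (Suc k))" and bB: "B \<in> sigma0 (Suc (Suc k))" for A B
  proof -
    obtain A' where A': "A = (\<Union>i::nat. A' i)" "\<forall>i. A' i \<in> pi0 (Suc k)" using aA unfolding sigma0_SS by iprover
    obtain B' where B': "B = (\<Union>i::nat. B' i)" "\<forall>i. B' i \<in> pi0 (Suc k)" using bB unfolding sigma0_SS by iprover
    define U where "U i = (if even i then A' (i div 2) else B' (i div 2))" for i :: nat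
    define I where "I i = A' (fst (prod_decode i)) \<inter> B' (snd (prod_decode i))" for i
    have u: "A \<union> B = (\<Union>i. U i)"
    proof
      show "A \<union> B \<subseteq> (\<Union>i. U i)"
      proof
        fix x assume "x \<in> A \<union> B"
        then show "x \<in> (\<Union>i. U i)"
        proof
          assume "x \<in> A" then obtain i where "x \<in> A' i" unfolding A'(1) by blast
          then have "x \<in> U (2*i)" by (simp add: U_def)
          then show ?thesis by blast
        next
          assume "x \<in> B" then obtain i where "x \<in> B' i" unfolding B'(1) by blast
          then have "x \<in> U (2*i+1)" by (simp add: U_def)
          then show ?thesis by blast
        qed
      qed
      show "(\<Union>i. U i) \<subseteq> A \<union> B" unfolding A'(1) B'(1) U_def by auto
    qed
    have u2: "\<forall>i. U i \<in> pi0 (Suc k)" using A' B' by (simp add: U_def)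
    have i: "A \<inter> B = (\<Union>i. I i)"
    proof
      show "A \<inter> B \<subseteq> (\<Union>i. I i)"
      proof
        fix x assume "x \<in> A \<inter> B"
        then obtain i j where "x \<in> A' i" "x \<in> B' j" unfolding A'(1) B'(1) by blast
        then have "x \<in> I (prod_encode (i, j))" by (simp add: I_def)
        then show "x \<in> (\<Union>i. I i)" by blast
      qed
      show "(\<Union>i. I i) \<subseteq> A \<inter> B" unfolding A'(1) B'(1) I_def by auto
    qed
    have i2: "\<forall>i. I i \<in> pi0 (Suc k)" using A' B' pi by (simp add: I_def)
    show ?thesis unfolding sigma0_SS
      by (intro conjI exI[of _ U] exI[of _ I] u u2 i i2)
  qed
  show ?case using 1 2 3 by blast
qed

definition boolclosed :: "(nat \<Rightarrow> nat) set set \<Rightarrow> bool" where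
  "boolclosed C \<longleftrightarrow> {} \<in> C \<and> UNIV \<in> C \<and> (\<forall>A\<in>C. - A \<in> C) \<and>
     (\<forall>A\<in>C. \<forall>B\<in>C. A \<union> B \<in> C \<and> A \<inter> B \<in> C)"

lemma boolclosed_clopen: "boolclosed {A. open A \<and> closed A}"
  unfolding boolclosed_def by (auto simp: open_Compl closed_Compl)

lemma boolclosed_delta0: "boolclosed (delta0 (Suc k))"
proof -
  note S = sigma0_closed[of k]
  have pe: "{} \<in> pi0 (Suc k)" "UNIV \<in> pi0 (Suc k)" using S by (simp_all add: pi0_iff)
  have pu: "A \<union> B \<in> pi0 (Suc k) \<and> A \<inter> B \<in> pi0 (Suc k)" if "A \<in> pi0 (Suc k)" "B \<in> pi0 (Suc k)" for A B
  proof -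
    have "- A \<inter> - B \<in> sigma0 (Suc k)" "- A \<union> - B \<in> sigma0 (Suc k)" using S that by (simp_all add: pi0_iff)
    then show ?thesis by (simp add: pi0_iff)
  qed
  show ?thesis unfolding boolclosed_def delta0_def
    using S pe pu by (auto simp: pi0_iff)
qed

lemma bool_comb:
  assumes C: "boolclosed C" and T: "\<And>i. {f. T f i} \<in> C"
  shows "{f. P (map (T f) [0..<k])} \<in> C"
proof (induction k arbitrary: P)
  case 0 then show ?case using C unfolding boolclosed_def by (cases "P []") auto
next
  case (Suc k)
  have e: "{f. P (map (T f) [0..<Suc k])} =
    ({f. T f k} \<inter> {f. P (map (T f) [0..<k] @ [True])}) \<union> (- {f. T f k} \<inter> {f. P (map (T f) [0..<k] @ [False])})"
  proof (rule set_eqI)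
    fix x show "x \<in> {f. P (map (T f) [0..<Suc k])} \<longleftrightarrow> x \<in> ({f. T f k} \<inter> {f. P (map (T f) [0..<k] @ [True])}) \<union> (- {f. T f k} \<inter> {f. P (map (T f) [0..<k] @ [False])})"
      by (cases "T x k") auto
  qed
  have "{f. P (map (T f) [0..<k] @ [True])} \<in> C" using Suc[of "\<lambda>bs. P (bs @ [True])"] .
  moreover have "{f. P (map (T f) [0..<k] @ [False])} \<in> C" using Suc[of "\<lambda>bs. P (bs @ [False])"] .
  ultimately show ?case unfolding e using C T unfolding boolclosed_def by blast
qed

definition cls :: "nat \<Rightarrow> (nat \<Rightarrow> nat) set set" where
  "cls m = (if m = 0 then {A. open A \<and> closed A} else delta0 m)"

lemma boolclosed_cls: "boolclosed (cls m)"
  by (cases m) (simp_all add: cls_def boolclosed_clopen boolclosed_delta0)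

lemma delta_sat: assumes "is_Delta m \<phi>" shows "{f. sat f e \<phi>} \<in> cls m"
proof (cases m)
  case 0 then show ?thesis using assms locconst_clopen[OF sat_loc, of \<phi> e] by (simp add: cls_def)
next
  case (Suc k)
  obtain \<psi> \<theta> where p: "is_Sigma (Suc k) \<psi>" "equiv_fm \<phi> \<psi>" "is_Pi (Suc k) \<theta>" "equiv_fm \<phi> \<theta>"
    using assms Suc by auto
  have e1: "{f. sat f e \<phi>} = {f. sat f e \<psi>}" using p(2) unfolding equiv_fm_def by auto
  have e2: "{f. sat f e \<phi>} = {f. sat f e \<theta>}" using p(4) unfolding equiv_fm_def by auto
  have s1: "{f. sat f e \<psi>} \<in> sigma0 (Suc k)" using sat_sigma_pi[of k \<psi>] p(1) by blast
  have s2: "{f. sat f e \<theta>} \<in> pi0 (Suc k)" using sat_sigma_pi[of k \<theta>] p(3) by blast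
  show ?thesis unfolding cls_def delta0_def using Suc s1 s2 e1 e2 by simp
qed

theorem mainTheorem11:
  fixes m :: nat and S :: "(nat \<Rightarrow> nat) set"
  assumes "guessable m S"
  shows "S \<in> delta' (m + 2) \<and>
         S \<in> union_of_inters (if m = 0 then {A. open A \<and> closed A} else delta0 m) \<and>
         S \<in> inter_of_unions (if m = 0 then {A. open A \<and> closed A} else delta0 m)"
proof -
  obtain Sg and phi :: "nat \<Rightarrow> fm" and G :: "nat list \<Rightarrow> nat" where r: "range phi = {\<phi>. sentence \<phi> \<and> syms \<phi> \<subseteq> Sg \<and> is_Delta m \<phi>}"
    and lim: "\<forall>f::nat \<Rightarrow> nat. (\<lambda>n. G (map (\<lambda>i. truth f (phi i)) [0..<Suc n])) \<longlonglongrightarrow> (if f \<in> S then 1 else 0)"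
    using assms unfolding guessable_def by iprover
  have D: "is_Delta m (phi i)" for i
  proof -
    have "phi i \<in> {\<phi>. sentence \<phi> \<and> syms \<phi> \<subseteq> Sg \<and> is_Delta m \<phi>}" unfolding r[symmetric] by (rule rangeI)
    then show ?thesis by simp
  qed
  define B where "B n = {f. G (map (\<lambda>i. truth f (phi i)) [0..<Suc n]) = 1}" for n
  have BC: "B n \<in> cls m" for n
  proof -
    have e: "B n = {f. (\<lambda>bs. G (map (\<lambda>b. if b then 1 else 0) bs) = 1) (map (\<lambda>i. sat f (\<lambda>_. 0) (phi i)) [0..<Suc n])}"
      unfolding B_def truth_def by (simp add: comp_def)
    show ?thesis unfolding e
      by (rule bool_comb[OF boolclosed_cls, of "\<lambda>f i. sat f (\<lambda>_. 0) (phi i)"]) (rule delta_sat[OF D])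
  qed
  have ev: "\<exists>N. \<forall>n\<ge>N. (f \<in> B n \<longleftrightarrow> f \<in> S)" for f
  proof -
    have "eventually (\<lambda>n. G (map (\<lambda>i. truth f (phi i)) [0..<Suc n]) = (if f \<in> S then 1 else 0)) sequentially"
      using tendsto_discrete[THEN iffD1, OF spec[OF lim, of f]] .
    then obtain N where N: "\<forall>n\<ge>N. G (map (\<lambda>i. truth f (phi i)) [0..<Suc n]) = (if f \<in> S then 1 else 0)"
      unfolding eventually_sequentially by blast
    show ?thesis
    proof (intro exI[of _ N] allI impI)
      fix n assume "N \<le> n"
      then have "G (map (\<lambda>i. truth f (phi i)) [0..<Suc n]) = (if f \<in> S then 1 else 0)" using N by blast
      then show "f \<in> B n \<longleftrightarrow> f \<in> S" unfolding B_def by simp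
    qed
  qed
  have S1: "S = (\<Union>N. \<Inter>j. B (N+j))"
  proof (rule set_eqI)
    fix f obtain N where N: "\<forall>n\<ge>N. (f \<in> B n \<longleftrightarrow> f \<in> S)" using ev by blast
    show "f \<in> S \<longleftrightarrow> f \<in> (\<Union>N. \<Inter>j. B (N+j))"
    proof
      assume "f \<in> S"
      then have "\<forall>j. f \<in> B (N+j)" using N by simp
      then show "f \<in> (\<Union>N. \<Inter>j. B (N+j))" by blast
    next
      assume "f \<in> (\<Union>N. \<Inter>j. B (N+j))"
      then obtain N' where "\<forall>j. f \<in> B (N'+j)" by blast
      then have "f \<in> B (N'+N)" by blast
      then show "f \<in> S" using N by simp
    qed
  qed
  have S2: "S = (\<Inter>N. \<Union>j. B (N+j))"
  proof (rule set_eqI)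
    fix f obtain N where N: "\<forall>n\<ge>N. (f \<in> B n \<longleftrightarrow> f \<in> S)" using ev by blast
    show "f \<in> S \<longleftrightarrow> f \<in> (\<Inter>N. \<Union>j. B (N+j))"
    proof
      assume "f \<in> S"
      then have "\<forall>N'. f \<in> B (N'+N)" using N by simp
      then show "f \<in> (\<Inter>N. \<Union>j. B (N+j))" by blast
    next
      assume "f \<in> (\<Inter>N. \<Union>j. B (N+j))"
      then obtain j where "f \<in> B (N+j)" by blast
      then show "f \<in> S" using N by simp
    qed
  qed
  have C1: "S \<in> union_of_inters (cls m)" unfolding union_of_inters_def
    by (rule CollectI, rule exI[of _ "\<lambda>i j. B (i+j)"]) (use S1 BC in simp)
  have C2: "S \<in> inter_of_unions (cls m)" unfolding inter_of_unions_def
    by (rule CollectI, rule exI[of _ "\<lambda>i j. B (i+j)"]) (use S2 BC in simp)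
  have C3: "S \<in> delta' (m + 2)"
  proof (cases "m = 0")
    case True
    then have cl: "open (B n) \<and> closed (B n)" for n using BC[of n] by (simp add: cls_def)
    have s1: "S \<in> sigma0 (Suc (Suc 0))"
    proof -
      have "\<forall>N. - (\<Inter>j. B (N+j)) \<in> sigma0 (Suc 0)" using cl by (simp add: open_UN open_Compl)
      then show ?thesis unfolding sigma0_SS pi0_iff
        by (intro exI[of _ "\<lambda>N. \<Inter>j. B (N+j)"] conjI S1)
    qed
    have s2: "- S \<in> sigma0 (Suc (Suc 0))"
    proof -
      have e: "- S = (\<Union>N. \<Inter>j. - B (N+j))" using S2 by auto
      have "\<forall>N. - (\<Inter>j. - B (N+j)) \<in> sigma0 (Suc 0)" using cl by (simp add: open_UN)
      then show ?thesis unfolding sigma0_SS pi0_iff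
        by (intro exI[of _ "\<lambda>N. \<Inter>j. - B (N+j)"] conjI e)
    qed
    have "S \<in> delta0 2" unfolding delta0_def numeral_2_eq_2 using s1 s2 by (simp del: sigma0.simps add: pi0_iff)
    then show ?thesis using True by (simp add: delta'_def)
  next
    case False
    then show ?thesis using C1 C2 by (simp add: delta'_def cls_def)
  qed
  show ?thesis using C1 C2 C3 unfolding cls_def by blast
qed

end
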